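(* Let $\gamma>0$, $n\ge1$, and for each $k\in\{1,\dots,n\}$ let $\hat\gamma(k)$ be an estimator of $\gamma$ satisfying the bias–variance condition (described in the context) with functions $V$ and $B$. Fix $\delta\in(0,1)$ and a nonempty grid $\mathcal K\subset\{1,\dots,n\}$ such that $(\delta,n,\mathcal K)$ is a sufficiently wide grid. Define $E(k)=\gamma V(k,\delta)+B(k,n,\delta)$. Then for all integers $k$ with $1\le k\le k^*(\delta,n)$, $$E(k)\le \min_{1\le j\le n}E(j)+\gamma V(k,\delta).$$
   Context: Bias–variance condition: there exist functions $V:\mathbb N\times(0,1)\to\mathbb R_+$ and $B:\mathbb N\times\mathbb N\times(0,1)\to\mathbb R_+$ such that for every $\delta\in(0,1)$ and every $k\in\{1,\dots,n\}$, with probability at least $1-\delta$, $|\hat\gamma(k)-\gamma|\le \gamma V(k,\delta)+B(k,n,\delta)$; moreover (a) for each $\delta$, $k\mapsto V(k,\delta)$ is non-increasing and $V(k,\delta)\to 0$ as $k\to\infty$; (b) $B$ is non-negative, $k\mapsto B(k,n,\delta)$ is non-decreasing, and $B(k,n,\delta)\to0$ as $k/n\to 0$. Sufficiently wide grid: with $k_{\min}=\min\mathcal K$, $k_{\max}=\max\mathcal K$, $B(k_{\min},n,\delta)\le\gamma V(k_{\min},\delta)$ and $B(k_{\max},n,\delta)>\gamma V(k_{\max},\delta)$. Oracle: $k^*(\delta,n)=\max\{k\in\mathcal K: B(k,n,\delta)\le \gamma V(k,\delta)\}$. *)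

theory Defs
  imports "HOL-Probability.Probability"
begin

text \<open>Natural-number arguments k range over positive integers.\<close>
definition bias_variance ::
  "'a measure \<Rightarrow> (nat \<Rightarrow> 'a \<Rightarrow> real) \<Rightarrow> real \<Rightarrow> nat \<Rightarrow>
   (nat \<Rightarrow> real \<Rightarrow> real) \<Rightarrow> (nat \<Rightarrow> nat \<Rightarrow> real \<Rightarrow> real) \<Rightarrow> bool" where
  "bias_variance M gh \<gamma> n V B \<longleftrightarrow>
     (\<forall>k \<delta>. 1 \<le> k \<longrightarrow> 0 < \<delta> \<longrightarrow> \<delta> < 1 \<longrightarrow> 0 \<le> V k \<delta>)
   \<and> (\<forall>k m \<delta>. 1 \<le> k \<longrightarrow> 1 \<le> m \<longrightarrow> 0 < \<delta> \<longrightarrow> \<delta> < 1 \<longrightarrow> 0 \<le> B k m \<delta>)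
   \<and> (\<forall>\<delta>. 0 < \<delta> \<longrightarrow> \<delta> < 1 \<longrightarrow> (\<forall>k\<in>{1..n}.
        measure M {\<omega> \<in> space M. \<bar>gh k \<omega> - \<gamma>\<bar> \<le> \<gamma> * V k \<delta> + B k n \<delta>} \<ge> 1 - \<delta>))
   \<and> (\<forall>\<delta>. 0 < \<delta> \<longrightarrow> \<delta> < 1 \<longrightarrow>
        (\<forall>k k'. 1 \<le> k \<longrightarrow> k \<le> k' \<longrightarrow> V k' \<delta> \<le> V k \<delta>)
        \<and> ((\<lambda>k. V k \<delta>) \<longlonglongrightarrow> 0))
   \<and> (\<forall>\<delta>. 0 < \<delta> \<longrightarrow> \<delta> < 1 \<longrightarrow>
        (\<forall>m k k'. 1 \<le> m \<longrightarrow> 1 \<le> k \<longrightarrow> k \<le> k' \<longrightarrow> B k m \<delta> \<le> B k' m \<delta>)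
        \<and> (\<forall>\<epsilon>>0. \<exists>\<eta>>0. \<forall>k m. 1 \<le> k \<longrightarrow> 1 \<le> m \<longrightarrow>
              real k / real m < \<eta> \<longrightarrow> B k m \<delta> < \<epsilon>))"

definition sufficiently_wide_grid ::
  "real \<Rightarrow> (nat \<Rightarrow> real \<Rightarrow> real) \<Rightarrow> (nat \<Rightarrow> nat \<Rightarrow> real \<Rightarrow> real) \<Rightarrow>
   real \<Rightarrow> nat \<Rightarrow> nat set \<Rightarrow> bool" where
  "sufficiently_wide_grid \<gamma> V B \<delta> n K \<longleftrightarrow>
     B (Min K) n \<delta> \<le> \<gamma> * V (Min K) \<delta> \<and> B (Max K) n \<delta> > \<gamma> * V (Max K) \<delta>"

definition oracle_k ::
  "real \<Rightarrow> (nat \<Rightarrow> real \<Rightarrow> real) \<Rightarrow> (nat \<Rightarrow> nat \<Rightarrow> real \<Rightarrow> real) \<Rightarrow>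
   real \<Rightarrow> nat \<Rightarrow> nat set \<Rightarrow> nat" where
  "oracle_k \<gamma> V B \<delta> n K = Max {k \<in> K. B k n \<delta> \<le> \<gamma> * V k \<delta>}"

end

theory Submission
  imports Defs
begin

theorem proposition2:
  fixes M :: "'a measure" and gh :: "nat \<Rightarrow> 'a \<Rightarrow> real"
    and \<gamma> \<delta> :: real and n :: nat and K :: "nat set"
    and V :: "nat \<Rightarrow> real \<Rightarrow> real" and B :: "nat \<Rightarrow> nat \<Rightarrow> real \<Rightarrow> real"
  assumes "prob_space M"
    and "\<And>k. k \<in> {1..n} \<Longrightarrow> gh k \<in> borel_measurable M"
    and "\<gamma> > 0" and "n \<ge> 1"
    and "bias_variance M gh \<gamma> n V B"
    and "0 < \<delta>" and "\<delta> < 1"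
    and "K \<subseteq> {1..n}" and "K \<noteq> {}"
    and "sufficiently_wide_grid \<gamma> V B \<delta> n K"
    and "1 \<le> k" and "k \<le> oracle_k \<gamma> V B \<delta> n K"
  shows "\<gamma> * V k \<delta> + B k n \<delta>
           \<le> Min ((\<lambda>j. \<gamma> * V j \<delta> + B j n \<delta>) ` {1..n}) + \<gamma> * V k \<delta>"
proof -
  let ?S = "{k \<in> K. B k n \<delta> \<le> \<gamma> * V k \<delta>}"
  have fK: "finite K" using assms(8) finite_subset by blast
  have "Min K \<in> ?S" using assms(10) fK assms(9) unfolding sufficiently_wide_grid_def by auto
  hence ne: "?S \<noteq> {}" by blast
  have fS: "finite ?S" using fK by simp
  define ks where "ks = oracle_k \<gamma> V B \<delta> n K"
  have ksS: "ks \<in> ?S" unfolding ks_def oracle_k_def using Max_in[OF fS ne] .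
  hence ks1: "1 \<le> ks" and ksn: "ks \<le> n" using assms(8) by auto
  have bv: "bias_variance M gh \<gamma> n V B" by (rule assms(5))
  note bv' = bv[unfolded bias_variance_def]
  have c1: "\<forall>k \<delta>. 1 \<le> k \<longrightarrow> 0 < \<delta> \<longrightarrow> \<delta> < 1 \<longrightarrow> 0 \<le> V k \<delta>" using bv' by (rule conjunct1)
  have c2: "\<forall>k m \<delta>. 1 \<le> k \<longrightarrow> 1 \<le> m \<longrightarrow> 0 < \<delta> \<longrightarrow> \<delta> < 1 \<longrightarrow> 0 \<le> B k m \<delta>"
    using bv' by (elim conjE)
  have c4: "\<forall>k k'. 1 \<le> k \<longrightarrow> k \<le> k' \<longrightarrow> V k' \<delta> \<le> V k \<delta>"
  proof -
    from bv' have "\<forall>\<delta>. 0 < \<delta> \<longrightarrow> \<delta> < 1 \<longrightarrow>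
        (\<forall>k k'. 1 \<le> k \<longrightarrow> k \<le> k' \<longrightarrow> V k' \<delta> \<le> V k \<delta>)
        \<and> ((\<lambda>k. V k \<delta>) \<longlonglongrightarrow> 0)" by (elim conjE)
    then show ?thesis using assms(6,7) by simp
  qed
  have c5: "\<forall>m k k'. 1 \<le> m \<longrightarrow> 1 \<le> k \<longrightarrow> k \<le> k' \<longrightarrow> B k m \<delta> \<le> B k' m \<delta>"
  proof -
    from bv' have "\<forall>\<delta>. 0 < \<delta> \<longrightarrow> \<delta> < 1 \<longrightarrow>
        (\<forall>m k k'. 1 \<le> m \<longrightarrow> 1 \<le> k \<longrightarrow> k \<le> k' \<longrightarrow> B k m \<delta> \<le> B k' m \<delta>)
        \<and> (\<forall>\<epsilon>>0. \<exists>\<eta>>0. \<forall>k m. 1 \<le> k \<longrightarrow> 1 \<le> m \<longrightarrow>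
              real k / real m < \<eta> \<longrightarrow> B k m \<delta> < \<epsilon>)" by (elim conjE)
    then show ?thesis using assms(6,7) by simp
  qed
  have Vmono: "\<And>a b. 1 \<le> a \<Longrightarrow> a \<le> b \<Longrightarrow> V b \<delta> \<le> V a \<delta>"
    using c4 by blast
  have Bmono: "\<And>a b. 1 \<le> a \<Longrightarrow> a \<le> b \<Longrightarrow> B a n \<delta> \<le> B b n \<delta>"
    using c5 assms(4) by blast
  have Vnn: "\<And>a. 1 \<le> a \<Longrightarrow> 0 \<le> V a \<delta>"
    using c1 assms(6,7) by blast
  have Bnn: "\<And>a. 1 \<le> a \<Longrightarrow> 0 \<le> B a n \<delta>"
    using c2 assms(4,6,7) by blast
  have Bk: "B k n \<delta> \<le> B ks n \<delta>" using Bmono assms(11,12) ks_def by blast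
  have key: "B k n \<delta> \<le> \<gamma> * V j \<delta> + B j n \<delta>" if j: "j \<in> {1..n}" for j
  proof (cases "j \<le> ks")
    case True
    have "V ks \<delta> \<le> V j \<delta>" using Vmono True j by auto
    hence "\<gamma> * V ks \<delta> \<le> \<gamma> * V j \<delta>" using assms(3) by simp
    moreover have "B ks n \<delta> \<le> \<gamma> * V ks \<delta>" using ksS by simp
    moreover have "0 \<le> B j n \<delta>" using Bnn j by auto
    ultimately show ?thesis using Bk by linarith
  next
    case False
    have "B ks n \<delta> \<le> B j n \<delta>" using Bmono False ks1 by auto
    moreover have "0 \<le> \<gamma> * V j \<delta>" using Vnn j assms(3) by auto
    ultimately show ?thesis using Bk by linarith
  qed
  have "B k n \<delta> \<le> Min ((\<lambda>j. \<gamma> * V j \<delta> + B j n \<delta>) ` {1..n})"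
    using key assms(4) by (subst Min_ge_iff) auto
  thus ?thesis by linarith
qed

end
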